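(* Let $\preceq_1,\preceq_2,\preceq_3$ be E-relations on $L$ and suppose $\preceq_2$ is not absurd. Then $(\preceq_1*\preceq_2)*\preceq_3=\preceq_1*(\preceq_2*\preceq_3)$.
   Context: $L$ is a propositional language built from a finite set of propositional variables with the connectives $\neg,\wedge,\vee,\rightarrow,\top,\bot$; $W$ is the finite set of propositional worlds. For $\theta\in L$, $S_\theta=\{w\in W\mid w\models\theta\}$; $E\models\phi$ means $\bigcap_{\theta\in E}S_\theta\subseteq S_\phi$, and $\models\phi$ means $\emptyset\models\phi$. E-relation: a relation $\preceq\subseteq L\times L$ such that for all $\theta,\phi,\psi$: (E1) $\theta\preceq\phi$ and $\phi\preceq\psi$ imply $\theta\preceq\psi$; (E2) $\theta\models\phi$ implies $\theta\preceq\phi$; (E3) $\theta\preceq\theta\wedge\phi$ or $\phi\preceq\theta\wedge\phi$; (E4) if $\bot\prec\psi$ for some $\psi$, then $\theta\preceq\phi$ for all $\theta$ implies $\models\phi$. Here $\theta\prec\phi$ iff $\theta\preceq\phi$ and not $\phi\preceq\theta$. An E-relation is absurd iff $\theta\preceq\phi$ for all $\theta,\phi\in L$. Sequences: finite sequences $\vec{\mathcal U}=(\mathcal U_0,\ldots,\mathcal U_k)$ of mutually disjoint subsets of $W$ (components may be empty, possibly repeatedly). $\mathrm{rank}^{\vec{\mathcal U}}(\theta)$ is the least $i$ with $\mathcal U_i\cap S_\theta\neq\emptyset$, $\infty$ if none ($i<\infty$ for all integers $i$). $\theta\mid\!\sim_{\vec{\mathcal U}}\phi$ iff $\mathrm{rank}^{\vec{\mathcal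 U}}(\theta)<\mathrm{rank}^{\vec{\mathcal U}}(\theta\wedge\neg\phi)$ or $\mathrm{rank}^{\vec{\mathcal U}}(\theta)=\infty$. $\vec{\mathcal U}$ is full iff $\bigcup_i\mathcal U_i=W$, empty iff $\bigcup_i\mathcal U_i=\emptyset$; $\Upsilon$ is the set of sequences which are full or empty. For $\vec{\mathcal U}\in\Upsilon$, $\theta\preceq_{\vec{\mathcal U}}\phi$ iff (not $\neg\theta\vee\neg\phi\mid\!\sim_{\vec{\mathcal U}}\theta$) or $\neg\phi\mid\!\sim_{\vec{\mathcal U}}\bot$. Sequence revision: for $\vec{\mathcal U}=(\mathcal U_0,\ldots,\mathcal U_k)$, $\vec{\mathcal V}=(\mathcal V_0,\ldots,\mathcal V_m)$ in $\Upsilon$, if $\vec{\mathcal U}$ is full then $\vec{\mathcal U}*\vec{\mathcal V}=(\mathcal U_0\cap\mathcal V_0,\ldots,\mathcal U_k\cap\mathcal V_0,\ \ldots,\ \mathcal U_0\cap\mathcal V_m,\ldots,\mathcal U_k\cap\mathcal V_m)$; otherwise $\vec{\mathcal U}*\vec{\mathcal V}=\vec{\mathcal V}$. Revision of E-relations: every E-relation equals $\preceq_{\vec{\mathcal U}}$ for some $\vec{\mathcal U}\in\Upsilon$, and for E-relations $\preceq_K,\preceq_E$ one defines $\preceq_K*\preceq_E=\preceq_{\vec{\mathcal U}*\vec{\mathcal V}}$, where $\vec{\mathcal U},\vec{\mathcal V}\in\Upsilon$ are any sequences with $\preceq_K=\preceq_{\vec{\mathcal U}}$ and $\preceq_E=\preceq_{\vec{\mathcal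 V}}$ (the result is independent of this choice and is again an E-relation). *)

theory Defs
  imports Main "HOL-Library.Extended_Nat"
begin

datatype 'v form =
    Var 'v
  | Neg "'v form"
  | Conj "'v form" "'v form"
  | Disj "'v form" "'v form"
  | Imp "'v form" "'v form"
  | Top
  | Bot

(* worlds = valuations, represented as the set of true variables *)
fun sat :: "'v set \<Rightarrow> 'v form \<Rightarrow> bool" where
  "sat w (Var p) = (p \<in> w)"
| "sat w (Neg a) = (\<not> sat w a)"
| "sat w (Conj a b) = (sat w a \<and> sat w b)"
| "sat w (Disj a b) = (sat w a \<or> sat w b)"
| "sat w (Imp a b) = (sat w a \<longrightarrow> sat w b)"
| "sat w Top = True"
| "sat w Bot = False"

definition S :: "'v form \<Rightarrow> 'v set set" where
  "S \<theta> = {w. sat w \<theta>}"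

definition entails :: "'v form \<Rightarrow> 'v form \<Rightarrow> bool" where
  "entails \<theta> \<phi> \<longleftrightarrow> S \<theta> \<subseteq> S \<phi>"

definition valid :: "'v form \<Rightarrow> bool" where
  "valid \<phi> \<longleftrightarrow> S \<phi> = UNIV"

definition strict :: "('v form \<Rightarrow> 'v form \<Rightarrow> bool) \<Rightarrow> 'v form \<Rightarrow> 'v form \<Rightarrow> bool" where
  "strict r \<theta> \<phi> \<longleftrightarrow> r \<theta> \<phi> \<and> \<not> r \<phi> \<theta>"

definition E_relation :: "('v form \<Rightarrow> 'v form \<Rightarrow> bool) \<Rightarrow> bool" where
  "E_relation r \<longleftrightarrow>
     (\<forall>\<theta> \<phi> \<psi>. r \<theta> \<phi> \<longrightarrow> r \<phi> \<psi> \<longrightarrow> r \<theta> \<psi>) \<and>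
     (\<forall>\<theta> \<phi>. entails \<theta> \<phi> \<longrightarrow> r \<theta> \<phi>) \<and>
     (\<forall>\<theta> \<phi>. r \<theta> (Conj \<theta> \<phi>) \<or> r \<phi> (Conj \<theta> \<phi>)) \<and>
     ((\<exists>\<psi>. strict r Bot \<psi>) \<longrightarrow> (\<forall>\<phi>. (\<forall>\<theta>. r \<theta> \<phi>) \<longrightarrow> valid \<phi>))"

definition absurd :: "('v form \<Rightarrow> 'v form \<Rightarrow> bool) \<Rightarrow> bool" where
  "absurd r \<longleftrightarrow> (\<forall>\<theta> \<phi>. r \<theta> \<phi>)"

definition is_seq :: "'v set set list \<Rightarrow> bool" where
  "is_seq U \<longleftrightarrow> U \<noteq> [] \<and>
     (\<forall>i<length U. \<forall>j<length U. i \<noteq> j \<longrightarrow> U ! i \<inter> U ! j = {})"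

definition rank :: "'v set set list \<Rightarrow> 'v form \<Rightarrow> enat" where
  "rank U \<theta> = (if \<exists>i<length U. U ! i \<inter> S \<theta> \<noteq> {}
                then enat (LEAST i. i < length U \<and> U ! i \<inter> S \<theta> \<noteq> {})
                else \<infinity>)"

definition nm :: "'v set set list \<Rightarrow> 'v form \<Rightarrow> 'v form \<Rightarrow> bool" where
  "nm U \<theta> \<phi> \<longleftrightarrow> rank U \<theta> < rank U (Conj \<theta> (Neg \<phi>)) \<or> rank U \<theta> = \<infinity>"

definition full :: "'v set set list \<Rightarrow> bool" where
  "full U \<longleftrightarrow> \<Union>(set U) = UNIV"

definition empty_seq :: "'v set set list \<Rightarrow> bool" where
  "empty_seq U \<longleftrightarrow> \<Union>(set U) = {}"

definition Ups :: "'v set set list set" where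
  "Ups = {U. is_seq U \<and> (full U \<or> empty_seq U)}"

definition prec :: "'v set set list \<Rightarrow> 'v form \<Rightarrow> 'v form \<Rightarrow> bool" where
  "prec U \<theta> \<phi> \<longleftrightarrow> \<not> nm U (Disj (Neg \<theta>) (Neg \<phi>)) \<theta> \<or> nm U (Neg \<phi>) Bot"

(* (U_0 \<inter> V_0, ..., U_k \<inter> V_0, ..., U_0 \<inter> V_m, ..., U_k \<inter> V_m) *)
definition seq_rev :: "'v set set list \<Rightarrow> 'v set set list \<Rightarrow> 'v set set list" where
  "seq_rev U V = (if full U then concat (map (\<lambda>v. map (\<lambda>u. u \<inter> v) U) V) else V)"

(* revision of E-relations via (arbitrarily chosen) representing sequences in Upsilon *)
definition rep :: "('v form \<Rightarrow> 'v form \<Rightarrow> bool) \<Rightarrow> 'v set set list" where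
  "rep r = (SOME U. U \<in> Ups \<and> prec U = r)"

definition erev :: "('v form \<Rightarrow> 'v form \<Rightarrow> bool) \<Rightarrow> ('v form \<Rightarrow> 'v form \<Rightarrow> bool)
                     \<Rightarrow> ('v form \<Rightarrow> 'v form \<Rightarrow> bool)" where
  "erev r1 r2 = prec (seq_rev (rep r1) (rep r2))"

end

theory Submission
  imports Defs
begin

lemma S_simps[simp]: "S (Neg a) = - S a" "S (Conj a b) = S a \<inter> S b" "S (Disj a b) = S a \<union> S b"
  "S Top = UNIV" "S Bot = {}" "S (Imp a b) = - S a \<union> S b"
  by (auto simp: S_def)

definition rho :: "'a set list \<Rightarrow> 'a \<Rightarrow> enat" where
  "rho U w = (if \<exists>i<length U. w \<in> U!i then enat (LEAST i. i<length U \<and> w \<in> U!i) else \<infinity>)"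

definition rk :: "'a set list \<Rightarrow> 'a set \<Rightarrow> enat" where
  "rk U X = (if \<exists>i<length U. U ! i \<inter> X \<noteq> {}
                then enat (LEAST i. i < length U \<and> U ! i \<inter> X \<noteq> {}) else \<infinity>)"

lemma rank_rk: "rank U \<theta> = rk U (S \<theta>)" by (simp add: rank_def rk_def)

lemma rk_le_rho: assumes "w \<in> X" shows "rk U X \<le> rho U w"
proof (cases "\<exists>i<length U. w \<in> U!i")
  case True
  define i where "i = (LEAST i. i<length U \<and> w \<in> U!i)"
  have i: "i < length U \<and> w \<in> U!i" unfolding i_def using LeastI_ex[OF True] by simp
  then have ex: "\<exists>i<length U. U!i \<inter> X \<noteq> {}" using assms by blast
  have "(LEAST j. j < length U \<and> U!j \<inter> X \<noteq> {}) \<le> i" using i assms by (intro Least_le) blast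
  then show ?thesis using ex True by (simp add: rk_def rho_def i_def)
next
  case False
  then have "rho U w = \<infinity>" by (simp add: rho_def)
  then show ?thesis by simp
qed

lemma rk_witness: assumes "rk U X \<noteq> \<infinity>" shows "\<exists>w\<in>X. rho U w = rk U X"
proof -
  have ex: "\<exists>i<length U. U!i \<inter> X \<noteq> {}" using assms by (auto simp: rk_def split: if_splits)
  define k where "k = (LEAST i. i < length U \<and> U!i \<inter> X \<noteq> {})"
  have k: "k < length U \<and> U!k \<inter> X \<noteq> {}" unfolding k_def using LeastI_ex[OF ex] by simp
  then obtain w where w: "w \<in> U!k" "w \<in> X" by blast
  have ew: "\<exists>i<length U. w \<in> U!i" using k w by blast
  define m where "m = (LEAST i. i<length U \<and> w \<in> U!i)"
  have m: "m < length U \<and> w \<in> U!m" unfolding m_def using LeastI_ex[OF ew] by simp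
  have "m \<le> k" unfolding m_def using k w by (intro Least_le) blast
  moreover have "k \<le> m" unfolding k_def using m w by (intro Least_le) blast
  ultimately have "m = k" by simp
  moreover have "rho U w = enat m" using ew by (simp add: rho_def m_def)
  moreover have "rk U X = enat k" using ex by (simp add: rk_def k_def)
  ultimately show ?thesis using w by auto
qed

lemma rk_le_iff: "rk U X \<le> rk U Y \<longleftrightarrow> (\<forall>w\<in>Y. rho U w \<noteq> \<infinity> \<longrightarrow> (\<exists>w'\<in>X. rho U w' \<le> rho U w))"
proof
  assume H: "rk U X \<le> rk U Y"
  show "\<forall>w\<in>Y. rho U w \<noteq> \<infinity> \<longrightarrow> (\<exists>w'\<in>X. rho U w' \<le> rho U w)"
  proof (intro ballI impI)
    fix w assume w: "w \<in> Y" "rho U w \<noteq> \<infinity>"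
    then have le: "rk U X \<le> rho U w" using H rk_le_rho[of w Y U] by (meson order_trans)
    then have "rk U X \<noteq> \<infinity>" using w(2) by (cases "rk U X") auto
    then obtain w' where "w' \<in> X" "rho U w' = rk U X" using rk_witness by blast
    then show "\<exists>w'\<in>X. rho U w' \<le> rho U w" using le by metis
  qed
next
  assume H: "\<forall>w\<in>Y. rho U w \<noteq> \<infinity> \<longrightarrow> (\<exists>w'\<in>X. rho U w' \<le> rho U w)"
  show "rk U X \<le> rk U Y"
  proof (cases "rk U Y = \<infinity>")
    case True then show ?thesis by simp
  next
    case False
    then obtain w where w: "w\<in>Y" "rho U w = rk U Y" using rk_witness by blast
    with H False obtain w' where "w'\<in>X" "rho U w' \<le> rho U w" by auto
    then show ?thesis using rk_le_rho[of w' X U] w(2) by auto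
  qed
qed

lemma rk_Un: "rk U (A \<union> B) = min (rk U A) (rk U B)"
proof (rule antisym)
  have "rk U (A \<union> B) \<le> rk U A" by (subst rk_le_iff) auto
  moreover have "rk U (A \<union> B) \<le> rk U B" by (subst rk_le_iff) auto
  ultimately show "rk U (A \<union> B) \<le> min (rk U A) (rk U B)" by simp
  show "min (rk U A) (rk U B) \<le> rk U (A \<union> B)"
  proof (cases "rk U (A \<union> B) = \<infinity>")
    case True then show ?thesis by simp
  next
    case False
    then obtain w where w: "w \<in> A \<union> B" "rho U w = rk U (A \<union> B)" using rk_witness by blast
    then show ?thesis using rk_le_rho[of w A U] rk_le_rho[of w B U]
      by (metis Un_iff min.coboundedI1 min.coboundedI2)
  qed
qed

lemma prec_rk: "prec U \<theta> \<phi> \<longleftrightarrow> rk U (- S \<theta>) \<le> rk U (- S \<phi>)"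
proof -
  have e1: "(- S \<theta> \<union> - S \<phi>) \<inter> - S \<theta> = - S \<theta>" by blast
  define a where "a = rk U (- S \<theta>)"
  define b where "b = rk U (- S \<phi>)"
  have "prec U \<theta> \<phi> \<longleftrightarrow> \<not> (min a b < a \<or> min a b = \<infinity>) \<or> b = \<infinity>"
    unfolding prec_def nm_def rank_rk a_def b_def by (simp add: e1 rk_Un)
  also have "\<dots> \<longleftrightarrow> a \<le> b" by (cases a; cases b) (auto simp: min_def)
  finally show ?thesis by (simp add: a_def b_def)
qed

lemma prec_char: "prec U \<theta> \<phi> \<longleftrightarrow> (\<forall>w. w \<notin> S \<phi> \<longrightarrow> rho U w \<noteq> \<infinity> \<longrightarrow> (\<exists>w'. w' \<notin> S \<theta> \<and> rho U w' \<le> rho U w))"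
  by (simp add: prec_rk rk_le_iff Ball_def Bex_def)

definition disjl :: "'a set list \<Rightarrow> bool" where
  "disjl U \<longleftrightarrow> (\<forall>i<length U. \<forall>j<length U. i \<noteq> j \<longrightarrow> U!i \<inter> U!j = {})"

lemma is_seq_disjl: "is_seq U \<longleftrightarrow> U \<noteq> [] \<and> disjl U"
  by (simp add: is_seq_def disjl_def)

lemma rho_mem: assumes "disjl U" "i < length U" "w \<in> U!i" shows "rho U w = enat i"
proof -
  have "(LEAST j. j<length U \<and> w \<in> U!j) = i"
  proof (rule Least_equality)
    show "i < length U \<and> w \<in> U ! i" using assms by simp
    fix j assume "j < length U \<and> w \<in> U ! j"
    then have "j = i" using assms unfolding disjl_def by blast
    then show "i \<le> j" by simp
  qed
  then show ?thesis using assms by (auto simp: rho_def)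
qed

lemma rho_inf: "rho U w = \<infinity> \<longleftrightarrow> (\<forall>i<length U. w \<notin> U!i)"
  by (simp add: rho_def)

lemma rho_fin: assumes "rho U w = enat k" shows "k < length U \<and> w \<in> U!k"
proof -
  have ex: "\<exists>i<length U. w \<in> U!i" using assms by (auto simp: rho_def split: if_splits)
  then have "k = (LEAST i. i<length U \<and> w \<in> U!i)" using assms by (simp add: rho_def)
  then show ?thesis using LeastI_ex[OF ex] by simp
qed

lemma mem_Union_nth: "(\<exists>x\<in>set U. w \<in> x) \<longleftrightarrow> (\<exists>i<length U. w \<in> U!i)"
  by (metis in_set_conv_nth)

lemma full_rho: "full U \<longleftrightarrow> (\<forall>w. rho U w \<noteq> \<infinity>)"
proof -
  have "full U \<longleftrightarrow> (\<forall>w. \<exists>x\<in>set U. w \<in> x)" unfolding full_def by blast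
  then show ?thesis unfolding rho_inf mem_Union_nth by blast
qed

lemma empty_rho: "empty_seq U \<longleftrightarrow> (\<forall>w. rho U w = \<infinity>)"
proof -
  have "empty_seq U \<longleftrightarrow> (\<forall>w. \<not> (\<exists>x\<in>set U. w \<in> x))" unfolding empty_seq_def by blast
  then show ?thesis unfolding rho_inf mem_Union_nth by blast
qed

lemma concat_len: "length (concat (map (\<lambda>v. map (\<lambda>u. f u v) U) V)) = length V * length U"
  by (induction V) auto

lemma concat_nth: "k < length V * length U \<Longrightarrow>
   concat (map (\<lambda>v. map (\<lambda>u. f u v) U) V) ! k = f (U ! (k mod length U)) (V ! (k div length U))"
proof (induction V arbitrary: k)
  case Nil then show ?case by simp
next
  case (Cons v V)
  let ?n = "length U"
  have npos: "0 < ?n" using Cons.prems by (cases "?n = 0") auto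
  show ?case
  proof (cases "k < ?n")
    case True then show ?thesis by (simp add: nth_append concat_len)
  next
    case False
    then have k: "k - ?n < length V * ?n" using Cons.prems by simp
    have "(k - ?n) mod ?n = k mod ?n" using False le_mod_geq[of ?n k] by simp
    moreover have "k div ?n = Suc ((k - ?n) div ?n)" using False npos le_div_geq[of ?n k] by simp
    ultimately show ?thesis using Cons.IH[OF k] False by (simp add: nth_append concat_len)
  qed
qed

lemma seq_rev_full: "full U \<Longrightarrow> seq_rev U V = concat (map (\<lambda>v. map (\<lambda>u. u \<inter> v) U) V)"
  by (simp add: seq_rev_def)

lemma seq_rev_nfull: "\<not> full U \<Longrightarrow> seq_rev U V = V"
  by (simp add: seq_rev_def)

lemma disj_seq_rev: assumes "full U" "disjl U" "disjl V" shows "disjl (seq_rev U V)"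
  unfolding disjl_def
proof (intro allI impI)
  let ?L = "seq_rev U V" let ?n = "length U"
  fix k k' assume kk: "k < length ?L" "k' < length ?L" "k \<noteq> k'"
  have len: "length ?L = length V * ?n" using assms by (simp add: seq_rev_full concat_len)
  have npos: "0 < ?n" using kk len by (cases "?n = 0") auto
  show "?L ! k \<inter> ?L ! k' = {}"
  proof (rule ccontr)
    assume "?L ! k \<inter> ?L ! k' \<noteq> {}"
    then obtain w where w: "w \<in> ?L ! k" "w \<in> ?L ! k'" by blast
    have kl: "k < length V * ?n" "k' < length V * ?n" using kk len by simp_all
    have "?L ! k = U ! (k mod ?n) \<inter> V ! (k div ?n)"
      unfolding seq_rev_full[OF assms(1)] by (rule concat_nth[OF kl(1)])
    moreover have "?L ! k' = U ! (k' mod ?n) \<inter> V ! (k' div ?n)"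
      unfolding seq_rev_full[OF assms(1)] by (rule concat_nth[OF kl(2)])
    ultimately have "w \<in> U ! (k mod ?n) \<inter> V ! (k div ?n)" "w \<in> U ! (k' mod ?n) \<inter> V ! (k' div ?n)"
      using w by simp_all
    moreover have "k mod ?n < ?n" "k' mod ?n < ?n" using npos by simp_all
    moreover have "k div ?n < length V" "k' div ?n < length V" using kk len
      by (simp_all add: less_mult_imp_div_less)
    ultimately have "k mod ?n = k' mod ?n" "k div ?n = k' div ?n"
      using assms(2,3) unfolding disjl_def by blast+
    then have "k = k'" by (metis div_mult_mod_eq)
    then show False using kk by simp
  qed
qed

lemma rho_seq_rev_fin: assumes "full U" "disjl U" "disjl V" "rho V w = enat j" "rho U w = enat i"
  shows "rho (seq_rev U V) w = enat (j * length U + i)"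
proof -
  let ?n = "length U"
  have i: "i < ?n" "w \<in> U!i" using rho_fin[OF assms(5)] by auto
  have j: "j < length V" "w \<in> V!j" using rho_fin[OF assms(4)] by auto
  have "j * ?n + i < (j + 1) * ?n" using i by simp
  also have "\<dots> \<le> length V * ?n" using j by (intro mult_le_mono1) simp
  finally have k: "j * ?n + i < length V * ?n" .
  have md: "(j * ?n + i) mod ?n = i" using i by simp
  have dv: "(j * ?n + i) div ?n = j" using i(1) by (intro div_nat_eqI) (simp_all add: mult.commute)
  have "seq_rev U V ! (j * ?n + i) = U ! ((j * ?n + i) mod ?n) \<inter> V ! ((j * ?n + i) div ?n)"
    unfolding seq_rev_full[OF assms(1)] by (rule concat_nth[OF k])
  then have "seq_rev U V ! (j * ?n + i) = U ! i \<inter> V ! j" by (simp only: md dv)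
  then have w: "w \<in> seq_rev U V ! (j * ?n + i)" using i j by simp
  have "j * ?n + i < length (seq_rev U V)" using k assms(1) by (simp add: seq_rev_full concat_len)
  from this w show ?thesis by (rule rho_mem[OF disj_seq_rev[OF assms(1-3)]])
qed

lemma rho_seq_rev_inf: assumes "full U" "rho V w = \<infinity>"
  shows "rho (seq_rev U V) w = \<infinity>"
  unfolding rho_inf
proof (intro allI impI)
  let ?n = "length U"
  fix k assume k: "k < length (seq_rev U V)"
  then have k': "k < length V * ?n" using assms(1) by (simp add: seq_rev_full concat_len)
  then have kd: "k div ?n < length V" by (rule less_mult_imp_div_less)
  have "\<forall>i<length V. w \<notin> V!i" using assms(2) by (simp only: rho_inf)
  then have "w \<notin> V ! (k div ?n)" using kd by blast
  moreover have "seq_rev U V ! k = U ! (k mod ?n) \<inter> V ! (k div ?n)"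
    unfolding seq_rev_full[OF assms(1)] by (rule concat_nth[OF k'])
  ultimately show "w \<notin> seq_rev U V ! k" by simp
qed

lemma Ups_seq_rev: assumes "U \<in> Ups" "V \<in> Ups" shows "seq_rev U V \<in> Ups"
proof (cases "full U")
  case False then show ?thesis using assms by (simp add: seq_rev_nfull)
next
  case True
  have dU: "disjl U" "U \<noteq> []" and dV: "disjl V" "V \<noteq> []" using assms by (auto simp: Ups_def is_seq_disjl)
  have ne: "seq_rev U V \<noteq> []"
  proof -
    have "length (seq_rev U V) = length V * length U" using True by (simp add: seq_rev_full concat_len)
    then show ?thesis using dU dV by auto
  qed
  have fe: "full V \<or> empty_seq V" using assms by (simp add: Ups_def)
  have "full (seq_rev U V) \<or> empty_seq (seq_rev U V)"
  proof (cases "full V")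
    case True
    have "rho (seq_rev U V) w \<noteq> \<infinity>" for w
    proof -
      have "rho U w \<noteq> \<infinity>" using \<open>full U\<close> full_rho by blast
      then obtain i where "rho U w = enat i" by auto
      moreover have "rho V w \<noteq> \<infinity>" using True full_rho by blast
      then obtain j where "rho V w = enat j" by auto
      ultimately show ?thesis using rho_seq_rev_fin[OF \<open>full U\<close> dU(1) dV(1)] by simp
    qed
    then show ?thesis by (simp add: full_rho)
  next
    case False
    then have "empty_seq V" using fe by simp
    then show ?thesis using rho_seq_rev_inf[OF \<open>full U\<close>] by (simp add: empty_rho)
  qed
  then show ?thesis using ne disj_seq_rev[OF True dU(1) dV(1)] by (simp add: Ups_def is_seq_disjl)
qed

definition req :: "('a \<Rightarrow> enat) \<Rightarrow> ('a \<Rightarrow> enat) \<Rightarrow> bool" where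
  "req f g \<longleftrightarrow> (\<forall>w w'. f w \<le> f w' \<longleftrightarrow> g w \<le> g w') \<and> (\<forall>w. f w = \<infinity> \<longleftrightarrow> g w = \<infinity>)"

lemma req_fin: assumes "req f g" "f w \<noteq> \<infinity>" shows "g w \<noteq> \<infinity>"
proof
  assume "g w = \<infinity>"
  moreover have "f w = \<infinity> \<longleftrightarrow> g w = \<infinity>" using assms(1) unfolding req_def by blast
  ultimately show False using assms(2) by simp
qed

lemma prec_req: assumes "req (rho U) (rho U')" shows "prec U = prec U'"
proof (intro ext)
  fix \<theta> \<phi> :: "'a form"
  show "prec U \<theta> \<phi> = prec U' \<theta> \<phi>"
  proof -
    have o: "\<And>w w'. rho U w \<le> rho U w' \<longleftrightarrow> rho U' w \<le> rho U' w'"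
      and i: "\<And>w. rho U w = \<infinity> \<longleftrightarrow> rho U' w = \<infinity>" using assms unfolding req_def by blast+
    show ?thesis unfolding prec_char by (simp only: o i)
  qed
qed

lemma definable: "\<exists>\<theta>. S \<theta> = (X :: ('v::finite) set set)"
proof -
  obtain vs :: "'v list" where vs: "set vs = UNIV" using finite_list[OF finite_UNIV] by blast
  define chi where "chi w = foldr Conj (map (\<lambda>v. if v \<in> w then Var v else Neg (Var v)) vs) Top" for w :: "'v set"
  have chi: "sat x (chi w) \<longleftrightarrow> x = w" for x w
  proof -
    have "sat x (foldr Conj (map (\<lambda>v. if v \<in> w then Var v else Neg (Var v)) ys) Top) \<longleftrightarrow> (\<forall>v\<in>set ys. v \<in> x \<longleftrightarrow> v \<in> w)" for ys
      by (induction ys) auto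
    then show ?thesis using vs unfolding chi_def by auto
  qed
  have "finite X" by simp
  then obtain ws where ws: "set ws = X" using finite_list by blast
  have "sat x (foldr Disj (map chi zs) Bot) \<longleftrightarrow> x \<in> set zs" for x zs using chi by (induction zs) auto
  then have "S (foldr Disj (map chi ws) Bot) = X" using ws by (auto simp: S_def)
  then show ?thesis by blast
qed

lemma req_prec: assumes "prec U = prec (U' :: ('v::finite) set set list)" shows "req (rho U) (rho U')"
proof -
  define \<alpha> where "\<alpha> w = (SOME \<theta>. S \<theta> = - {w})" for w :: "'v set"
  have \<alpha>: "S (\<alpha> w) = - {w}" for w unfolding \<alpha>_def using definable by (rule someI_ex)
  have p1: "prec V (\<alpha> w) (\<alpha> w') \<longleftrightarrow> (rho V w' \<noteq> \<infinity> \<longrightarrow> rho V w \<le> rho V w')" for V w w'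
    by (simp add: prec_char \<alpha>)
  have p2: "prec V Top (\<alpha> w) \<longleftrightarrow> rho V w = \<infinity>" for V w
    by (simp add: prec_char \<alpha>)
  have inf: "rho U w = \<infinity> \<longleftrightarrow> rho U' w = \<infinity>" for w using p2[of U w] p2[of U' w] assms by simp
  have "rho U w \<le> rho U w' \<longleftrightarrow> rho U' w \<le> rho U' w'" for w w'
  proof (cases "rho U w' = \<infinity>")
    case True then show ?thesis using inf[of w'] by simp
  next
    case False
    then show ?thesis using p1[of U w w'] p1[of U' w w'] assms inf[of w'] by simp
  qed
  then show ?thesis using inf unfolding req_def by blast
qed

lemma lex_arith: fixes i i' j j' n :: nat assumes "i < n" "i' < n"
  shows "j * n + i \<le> j' * n + i' \<longleftrightarrow> j < j' \<or> (j = j' \<and> i \<le> i')"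
proof (cases j j' rule: linorder_cases)
  case less
  have "Suc j * n \<le> j' * n" using less by (intro mult_le_mono1) simp
  then have "j * n + n \<le> j' * n" by simp
  then have "j * n + i \<le> j' * n + i'" using assms(1) by linarith
  then show ?thesis using less by blast
next
  case equal then show ?thesis by simp
next
  case greater
  have "Suc j' * n \<le> j * n" using greater by (intro mult_le_mono1) simp
  then have "j' * n + n \<le> j * n" by simp
  then have "\<not> j * n + i \<le> j' * n + i'" using assms(2) by linarith
  then show ?thesis using greater by auto
qed

lemma req_seq_rev:
  assumes fU: "full U" "full U'" and d: "disjl U" "disjl U'" "disjl V" "disjl V'"
    and rU: "req (rho U) (rho U')" and rV: "req (rho V) (rho V')"
  shows "req (rho (seq_rev U V)) (rho (seq_rev U' V'))"
proof -
  let ?A = "rho (seq_rev U V)" let ?B = "rho (seq_rev U' V')"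
  define iu where "iu w = the_enat (rho U w)" for w
  define iu' where "iu' w = the_enat (rho U' w)" for w
  have iu: "rho U w = enat (iu w)" for w
  proof -
    have "rho U w \<noteq> \<infinity>" using fU(1) full_rho by blast
    then show ?thesis by (cases "rho U w") (auto simp: iu_def)
  qed
  have iu': "rho U' w = enat (iu' w)" for w
  proof -
    have "rho U' w \<noteq> \<infinity>" using fU(2) full_rho by blast
    then show ?thesis by (cases "rho U' w") (auto simp: iu'_def)
  qed
  have iul: "iu w < length U" for w using rho_fin[OF iu] by blast
  have iul': "iu' w < length U'" for w using rho_fin[OF iu'] by blast
  have inf: "?A w = \<infinity> \<longleftrightarrow> ?B w = \<infinity>" for w
  proof (cases "rho V w")
    case (enat j)
    have "rho V' w \<noteq> \<infinity>" using req_fin[OF rV] enat by simp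
    then obtain j' where j': "rho V' w = enat j'" by auto
    show ?thesis using rho_seq_rev_fin[OF fU(1) d(1) d(3) enat iu] rho_seq_rev_fin[OF fU(2) d(2) d(4) j' iu'] by simp
  next
    case infinity
    then have "rho V' w = \<infinity>" using rV unfolding req_def by blast
    then show ?thesis using rho_seq_rev_inf[OF fU(1) infinity] rho_seq_rev_inf[OF fU(2)] by simp
  qed
  have ord: "?A w \<le> ?A w' \<longleftrightarrow> ?B w \<le> ?B w'" for w w'
  proof (cases "rho V w' = \<infinity>")
    case True
    then have "?A w' = \<infinity>" "?B w' = \<infinity>" using rho_seq_rev_inf[OF fU(1) True] inf by auto
    then show ?thesis by simp
  next
    case False
    then obtain j2 where j2: "rho V w' = enat j2" by auto
    have "rho V' w' \<noteq> \<infinity>" using req_fin[OF rV] j2 by simp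
    then obtain J2 where J2: "rho V' w' = enat J2" by auto
    show ?thesis
    proof (cases "rho V w = \<infinity>")
      case True
      then have "?A w = \<infinity>" "?B w = \<infinity>" using rho_seq_rev_inf[OF fU(1) True] inf by auto
      moreover have "?A w' = enat (j2 * length U + iu w')" using rho_seq_rev_fin[OF fU(1) d(1) d(3) j2 iu] .
      moreover have "?B w' = enat (J2 * length U' + iu' w')" using rho_seq_rev_fin[OF fU(2) d(2) d(4) J2 iu'] .
      ultimately show ?thesis by simp
    next
      case False
      then obtain j1 where j1: "rho V w = enat j1" by auto
      have "rho V' w \<noteq> \<infinity>" using req_fin[OF rV] j1 by simp
      then obtain J1 where J1: "rho V' w = enat J1" by auto
      have oV: "\<And>a b. rho V a \<le> rho V b \<longleftrightarrow> rho V' a \<le> rho V' b" using rV unfolding req_def by blast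
      have oU: "\<And>a b. rho U a \<le> rho U b \<longleftrightarrow> rho U' a \<le> rho U' b" using rU unfolding req_def by blast
      have a1: "j2 \<le> j1 \<longleftrightarrow> J2 \<le> J1" using oV[of w' w] j1 j2 J1 J2 by simp
      have a2: "j1 \<le> j2 \<longleftrightarrow> J1 \<le> J2" using oV[of w w'] j1 j2 J1 J2 by simp
      have c1: "j1 < j2 \<longleftrightarrow> J1 < J2" using a1 by auto
      have c2: "j1 = j2 \<longleftrightarrow> J1 = J2" using a1 a2 by auto
      have c3: "iu w \<le> iu w' \<longleftrightarrow> iu' w \<le> iu' w'" using oU[of w w'] iu[of w] iu[of w'] iu'[of w] iu'[of w'] by simp
      show ?thesis
        using rho_seq_rev_fin[OF fU(1) d(1) d(3) j1 iu] rho_seq_rev_fin[OF fU(2) d(2) d(4) J1 iu']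
          rho_seq_rev_fin[OF fU(1) d(1) d(3) j2 iu] rho_seq_rev_fin[OF fU(2) d(2) d(4) J2 iu']
          lex_arith[OF iul[of w] iul[of w'], of j1 j2] lex_arith[OF iul'[of w] iul'[of w'], of J1 J2] c1 c2 c3
        by simp
    qed
  qed
  show ?thesis using inf ord unfolding req_def by blast
qed

lemma indep:
  assumes "U \<in> Ups" "U' \<in> Ups" "V \<in> Ups" "V' \<in> Ups"
    and "prec U = prec (U' :: ('v::finite) set set list)" "prec V = prec V'"
  shows "prec (seq_rev U V) = prec (seq_rev U' V')"
proof -
  have rU: "req (rho U) (rho U')" and rV: "req (rho V) (rho V')" using req_prec assms(5,6) by auto
  have "full U \<longleftrightarrow> full U'" using rU unfolding full_rho req_def by blast
  moreover have d: "disjl U" "disjl U'" "disjl V" "disjl V'" using assms(1-4) by (auto simp: Ups_def is_seq_disjl)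
  ultimately show ?thesis
    using req_seq_rev[OF _ _ d rU rV] prec_req assms(6) by (cases "full U") (auto simp: seq_rev_nfull seq_rev_full[symmetric])
qed

lemma E_trans: "E_relation r \<Longrightarrow> r a b \<Longrightarrow> r b c \<Longrightarrow> r a c"
  unfolding E_relation_def by blast

lemma E_ent: "E_relation r \<Longrightarrow> S a \<subseteq> S b \<Longrightarrow> r a b"
  unfolding E_relation_def entails_def by blast

lemma E_conj: "E_relation r \<Longrightarrow> r a (Conj a b) \<or> r b (Conj a b)"
  unfolding E_relation_def by blast

lemma E_total: assumes "E_relation r" shows "r a b \<or> r b a"
proof -
  have "r (Conj a b) a" "r (Conj a b) b" using E_ent[OF assms] by auto
  then show ?thesis using E_conj[OF assms, of a b] E_trans[OF assms] by blast
qed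

lemma E_max: assumes "E_relation r" "\<not> absurd r" "\<forall>\<theta>. r \<theta> \<phi>" shows "S \<phi> = UNIV"
proof -
  obtain a b where ab: "\<not> r a b" using assms(2) unfolding absurd_def by blast
  have "r Bot a" using E_ent[OF assms(1)] by simp
  moreover have "\<not> r a Bot"
  proof
    assume "r a Bot"
    moreover have "r Bot b" using E_ent[OF assms(1)] by simp
    ultimately show False using ab E_trans[OF assms(1)] by blast
  qed
  ultimately have "strict r Bot a" by (simp add: strict_def)
  moreover have h: "(\<exists>\<psi>. strict r Bot \<psi>) \<longrightarrow> (\<forall>\<phi>. (\<forall>\<theta>. r \<theta> \<phi>) \<longrightarrow> valid \<phi>)"
    using assms(1) unfolding E_relation_def by (elim conjE) assumption
  ultimately have "valid \<phi>" using assms(3) by blast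
  then show ?thesis unfolding valid_def .
qed

lemma represent: assumes E: "E_relation (r :: ('v::finite) form \<Rightarrow> 'v form \<Rightarrow> bool)"
  shows "\<exists>U\<in>Ups. prec U = r"
proof (cases "absurd r")
  case True
  let ?U = "[{}] :: 'v set set list"
  have "?U \<in> Ups" by (simp add: Ups_def is_seq_def empty_seq_def)
  moreover have "rho ?U w = \<infinity>" for w by (simp add: rho_inf)
  then have "prec ?U = r" using True unfolding absurd_def by (intro ext) (simp add: prec_char)
  ultimately show ?thesis by blast
next
  case nabs: False
  define \<alpha> where "\<alpha> w = (SOME \<theta>. S \<theta> = - {w})" for w :: "'v set"
  have \<alpha>: "S (\<alpha> w) = - {w}" for w unfolding \<alpha>_def using definable by (rule someI_ex)
  define h where "h w = card {x. strict r (\<alpha> x) (\<alpha> w)}" for w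
  define N where "N = card (UNIV :: 'v set set)"
  define U where "U = map (\<lambda>i. {w. h w = i}) [0..<N]"
  have hN: "h w < N" for w
  proof -
    have "{x. strict r (\<alpha> x) (\<alpha> w)} \<subset> UNIV" unfolding strict_def by blast
    then show ?thesis unfolding h_def N_def by (intro psubset_card_mono) simp_all
  qed
  have lenU: "length U = N" by (simp add: U_def)
  have Unth: "i < N \<Longrightarrow> U ! i = {w. h w = i}" for i by (simp add: U_def)
  have dU: "disjl U" unfolding disjl_def lenU using Unth by auto
  have rhoU: "rho U w = enat (h w)" for w
    using rho_mem[OF dU, of "h w" w] hN lenU Unth by simp
  have "U \<noteq> []" using hN[of "{}"] lenU by auto
  moreover have "full U" using rhoU by (simp add: full_rho)
  ultimately have UU: "U \<in> Ups" using dU by (simp add: Ups_def is_seq_disjl)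
  have sub: "{x. strict r (\<alpha> x) (\<alpha> a)} \<subseteq> {x. strict r (\<alpha> x) (\<alpha> b)}" if "r (\<alpha> a) (\<alpha> b)" for a b
  proof
    fix x assume "x \<in> {x. strict r (\<alpha> x) (\<alpha> a)}"
    then have x1: "r (\<alpha> x) (\<alpha> a)" and x2: "\<not> r (\<alpha> a) (\<alpha> x)" by (simp_all add: strict_def)
    have "r (\<alpha> x) (\<alpha> b)" by (rule E_trans[OF E x1 that])
    moreover have "\<not> r (\<alpha> b) (\<alpha> x)"
    proof
      assume "r (\<alpha> b) (\<alpha> x)"
      then have "r (\<alpha> a) (\<alpha> x)" by (rule E_trans[OF E that])
      then show False using x2 by simp
    qed
    ultimately show "x \<in> {x. strict r (\<alpha> x) (\<alpha> b)}" by (simp add: strict_def)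
  qed
  have hle: "h a \<le> h b \<longleftrightarrow> r (\<alpha> a) (\<alpha> b)" for a b
  proof
    assume "r (\<alpha> a) (\<alpha> b)"
    then show "h a \<le> h b" unfolding h_def by (intro card_mono) (simp_all add: sub)
  next
    assume hab: "h a \<le> h b"
    show "r (\<alpha> a) (\<alpha> b)"
    proof (rule ccontr)
      assume n: "\<not> r (\<alpha> a) (\<alpha> b)"
      then have rba: "r (\<alpha> b) (\<alpha> a)" using E_total[OF E] by blast
      have "b \<in> {x. strict r (\<alpha> x) (\<alpha> a)}" "b \<notin> {x. strict r (\<alpha> x) (\<alpha> b)}"
        using n rba unfolding strict_def by auto
      then have "{x. strict r (\<alpha> x) (\<alpha> b)} \<subset> {x. strict r (\<alpha> x) (\<alpha> a)}" using sub[OF rba] by blast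
      then have "h b < h a" unfolding h_def by (intro psubset_card_mono) simp_all
      then show False using hab by simp
    qed
  qed
  have L1: "r \<theta> (\<alpha> w)" if "w \<notin> S \<theta>" for \<theta> w using that by (intro E_ent[OF E]) (auto simp: \<alpha>)
  have L2gen: "\<forall>\<theta>. - S \<theta> = X \<longrightarrow> X \<noteq> {} \<longrightarrow> (\<exists>w\<in>X. r (\<alpha> w) \<theta>)" for X :: "'v set set"
  proof -
    have "finite X" by (rule finite_subset[OF subset_UNIV finite_UNIV])
    then show ?thesis
    proof (induction X rule: finite_induct)
      case empty then show ?case by simp
    next
      case (insert w X')
      show ?case
      proof (intro allI impI)
        fix \<theta> assume th: "- S \<theta> = insert w X'"
        show "\<exists>w'\<in>insert w X'. r (\<alpha> w') \<theta>"
        proof (cases "X' = {}")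
          case True
          then have "- S \<theta> = {w}" using th by simp
          then have "S \<theta> = - {w}" by auto
          then have "r (\<alpha> w) \<theta>" by (intro E_ent[OF E]) (simp add: \<alpha>)
          then show ?thesis by blast
        next
          case False
          obtain \<theta>' where th': "S \<theta>' = - X'" using definable by blast
          have "S \<theta> = - (insert w X')" using th by (metis double_compl)
          moreover have "S (Conj (\<alpha> w) \<theta>') = - {w} \<inter> - X'" by (simp add: \<alpha> th')
          ultimately have "S (Conj (\<alpha> w) \<theta>') = S \<theta>" by auto
          then have c: "r (Conj (\<alpha> w) \<theta>') \<theta>" by (intro E_ent[OF E]) simp
          from E_conj[OF E, of "\<alpha> w" \<theta>'] show ?thesis
          proof
            assume "r (\<alpha> w) (Conj (\<alpha> w) \<theta>')"
            then have "r (\<alpha> w) \<theta>" by (rule E_trans[OF E _ c])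
            then show ?thesis by blast
          next
            assume a: "r \<theta>' (Conj (\<alpha> w) \<theta>')"
            have "- S \<theta>' = X'" using th' by simp
            then have "\<exists>w\<in>X'. r (\<alpha> w) \<theta>'" using insert.IH False by blast
            then obtain w' where w'X: "w' \<in> X'" and w'r: "r (\<alpha> w') \<theta>'" by blast
            have "r \<theta>' \<theta>" by (rule E_trans[OF E a c])
            then have "r (\<alpha> w') \<theta>" by (rule E_trans[OF E w'r])
            then show ?thesis using \<open>w' \<in> X'\<close> by blast
          qed
        qed
      qed
    qed
  qed
  have L2: "\<exists>w. w \<notin> S \<theta> \<and> r (\<alpha> w) \<theta>" if "S \<theta> \<noteq> UNIV" for \<theta>
  proof -
    have "- S \<theta> \<noteq> {}" using that by auto
    then obtain w where "w \<in> - S \<theta>" "r (\<alpha> w) \<theta>" using L2gen[of "- S \<theta>"] by blast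
    then show ?thesis by auto
  qed
  have key: "r \<theta> \<phi> \<longleftrightarrow> (\<forall>w. w \<notin> S \<phi> \<longrightarrow> (\<exists>w'. w' \<notin> S \<theta> \<and> r (\<alpha> w') (\<alpha> w)))" for \<theta> \<phi>
  proof
    assume H: "r \<theta> \<phi>"
    show "\<forall>w. w \<notin> S \<phi> \<longrightarrow> (\<exists>w'. w' \<notin> S \<theta> \<and> r (\<alpha> w') (\<alpha> w))"
    proof (intro allI impI)
      fix w assume w: "w \<notin> S \<phi>"
      have t: "r \<theta> (\<alpha> w)" by (rule E_trans[OF E H L1[OF w]])
      show "\<exists>w'. w' \<notin> S \<theta> \<and> r (\<alpha> w') (\<alpha> w)"
      proof (cases "S \<theta> = UNIV")
        case True
        have "r x (\<alpha> w)" for x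
        proof -
          have "r x \<theta>" using True by (intro E_ent[OF E]) simp
          then show ?thesis by (rule E_trans[OF E _ t])
        qed
        then have "\<forall>x. r x (\<alpha> w)" by blast
        then have "S (\<alpha> w) = UNIV" by (rule E_max[OF E nabs])
        then show ?thesis using \<alpha> by auto
      next
        case False
        then obtain w' where "w' \<notin> S \<theta>" "r (\<alpha> w') \<theta>" using L2 by blast
        moreover have "r (\<alpha> w') (\<alpha> w)" using E_trans[OF E \<open>r (\<alpha> w') \<theta>\<close> t] .
        ultimately show ?thesis by blast
      qed
    qed
  next
    assume H: "\<forall>w. w \<notin> S \<phi> \<longrightarrow> (\<exists>w'. w' \<notin> S \<theta> \<and> r (\<alpha> w') (\<alpha> w))"
    show "r \<theta> \<phi>"
    proof (cases "S \<phi> = UNIV")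
      case True then show ?thesis by (intro E_ent[OF E]) simp
    next
      case False
      then obtain w where w: "w \<notin> S \<phi>" "r (\<alpha> w) \<phi>" using L2 by blast
      then obtain w' where w': "w' \<notin> S \<theta>" "r (\<alpha> w') (\<alpha> w)" using H by blast
      have "r \<theta> (\<alpha> w)" by (rule E_trans[OF E L1[OF w'(1)] w'(2)])
      then show ?thesis by (rule E_trans[OF E _ w(2)])
    qed
  qed
  have "prec U = r"
  proof (intro ext)
    fix \<theta> \<phi> show "prec U \<theta> \<phi> = r \<theta> \<phi>"
      using key[of \<theta> \<phi>] by (simp add: prec_char rhoU hle)
  qed
  then show ?thesis using UU by blast
qed

lemma concat_map_concat: "concat (map (\<lambda>x. concat (f x)) xs) = concat (concat (map f xs))"
  by (induction xs) auto

lemma full_seq_rev: assumes "full U" "full V" shows "full (seq_rev U V)"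
proof -
  have "\<exists>x\<in>set (seq_rev U V). w \<in> x" for w
  proof -
    obtain u v where "u \<in> set U" "v \<in> set V" "w \<in> u" "w \<in> v" using assms unfolding full_def by blast
    then have "u \<inter> v \<in> set (seq_rev U V)" "w \<in> u \<inter> v" using assms(1) by (auto simp: seq_rev_full)
    then show ?thesis by blast
  qed
  then show ?thesis unfolding full_def by blast
qed

lemma seq_rev_assoc: assumes "full V" shows "seq_rev (seq_rev B V) C = seq_rev B (seq_rev V C)"
proof (cases "full B")
  case True
  then have "full (seq_rev B V)" using full_seq_rev assms by blast
  then show ?thesis using True assms
    by (simp add: seq_rev_full map_concat concat_map_concat[symmetric] comp_def Int_assoc)
next
  case False
  then show ?thesis using assms by (simp add: seq_rev_nfull)
qed

lemma rep_ok: assumes "U \<in> Ups" shows "rep (prec U) \<in> Ups \<and> prec (rep (prec U)) = prec U"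
  unfolding rep_def by (rule someI[of _ U]) (simp add: assms)

theorem proposition7:
  fixes r1 r2 r3 :: "'v::finite form \<Rightarrow> 'v form \<Rightarrow> bool"
  assumes "E_relation r1" and "E_relation r2" and "E_relation r3"
    and "\<not> absurd r2"
  shows "erev (erev r1 r2) r3 = erev r1 (erev r2 r3)"
proof -
  obtain U1 where U1: "U1 \<in> Ups" "prec U1 = r1" using represent[OF assms(1)] by blast
  obtain U2 where U2: "U2 \<in> Ups" "prec U2 = r2" using represent[OF assms(2)] by blast
  obtain U3 where U3: "U3 \<in> Ups" "prec U3 = r3" using represent[OF assms(3)] by blast
  define B where "B = rep r1"
  define V where "V = rep r2"
  define C where "C = rep r3"
  have B: "B \<in> Ups" "prec B = r1" using rep_ok[OF U1(1)] U1(2) B_def by auto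
  have V: "V \<in> Ups" "prec V = r2" using rep_ok[OF U2(1)] U2(2) V_def by auto
  have C: "C \<in> Ups" "prec C = r3" using rep_ok[OF U3(1)] U3(2) C_def by auto
  have fV: "full V"
  proof (rule ccontr)
    assume "\<not> full V"
    then have "empty_seq V" using V(1) by (simp add: Ups_def)
    then have "\<forall>w. rho V w = \<infinity>" by (simp add: empty_rho)
    then have "absurd (prec V)" unfolding absurd_def prec_char by simp
    then show False using V(2) assms(4) by simp
  qed
  define A' where "A' = seq_rev B V"
  define D' where "D' = seq_rev V C"
  have A': "A' \<in> Ups" using Ups_seq_rev B(1) V(1) A'_def by blast
  have D': "D' \<in> Ups" using Ups_seq_rev V(1) C(1) D'_def by blast
  have e12: "erev r1 r2 = prec A'" by (simp add: erev_def A'_def B_def V_def)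
  have e23: "erev r2 r3 = prec D'" by (simp add: erev_def D'_def C_def V_def)
  have A: "rep (prec A') \<in> Ups" "prec (rep (prec A')) = prec A'" using rep_ok[OF A'] by auto
  have D: "rep (prec D') \<in> Ups" "prec (rep (prec D')) = prec D'" using rep_ok[OF D'] by auto
  have "erev (erev r1 r2) r3 = prec (seq_rev (rep (prec A')) C)" unfolding e12 by (simp add: erev_def C_def)
  also have "\<dots> = prec (seq_rev A' C)" using indep[OF A(1) A' C(1) C(1) A(2)] by simp
  also have "seq_rev A' C = seq_rev B D'" unfolding A'_def D'_def by (rule seq_rev_assoc[OF fV])
  also have "prec (seq_rev B D') = prec (seq_rev B (rep (prec D')))"
    using indep[OF B(1) B(1) D' D(1) refl D(2)[symmetric]] by simp
  also have "\<dots> = erev r1 (erev r2 r3)" unfolding e23 by (simp add: erev_def B_def)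
  finally show ?thesis .
qed

end
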